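(* Let $f$ and $g$ be multiplicative functions such that $S_f(x)\ll x^\alpha$, and suppose that $\hat{\mathbb{D}}_{\beta,k}(f,g)<\infty$ for some $\beta$ and some positive integer $k$. Suppose additionally that $f(n)=o(n^\delta)$ and $g(n)=o(n^\delta)$ for some $\delta>0$. Let $h$ be defined by $g=f*h$. If $\sigma>1/(k+1)+\delta$ is such that $\sigma\ge\max(\alpha,\beta)$, then there is $Y>0$ such that if $\hat H_Y(\sigma)$ is convergent, then $S_g(x)\ll x^\sigma$.
   Context: $S_f(x):=\sum_{n\le x}f(n)$. For multiplicative $f,g$ (not necessarily bounded), $\hat{\mathbb{D}}_{\beta,k}(f,g):=\sum_p\sum_{j=1}^k\frac{|f(p^j)-g(p^j)|}{p^{j\beta}}$ (sum over primes); $f,g$ are called $(\beta,k)$-strongly pretentious if this is finite. $(f*h)(n)=\sum_{dm=n}f(d)h(m)$. $\hat H_Y(\sigma):=\sum_{p\le Y}\sum_{k=1}^\infty\frac{|h(p^k)|}{p^{k\sigma}}$. *)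

theory Defs
  imports "HOL-Analysis.Analysis" "HOL-Library.Landau_Symbols"
begin

definition multiplicative :: "(nat \<Rightarrow> complex) \<Rightarrow> bool" where
  "multiplicative f \<longleftrightarrow> f 1 = 1 \<and> (\<forall>m n. coprime m n \<longrightarrow> f (m * n) = f m * f n)"

definition S :: "(nat \<Rightarrow> complex) \<Rightarrow> real \<Rightarrow> complex" where
  "S f x = (\<Sum>n\<in>{1..nat \<lfloor>x\<rfloor>}. f n)"

definition Dterm :: "real \<Rightarrow> nat \<Rightarrow> (nat \<Rightarrow> complex) \<Rightarrow> (nat \<Rightarrow> complex) \<Rightarrow> nat \<Rightarrow> real" where
  "Dterm \<beta> k f g p =
     (if prime p then (\<Sum>j=1..k. norm (f (p ^ j) - g (p ^ j)) / real p powr (real j * \<beta>)) else 0)"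

text \<open>f, g are (beta,k)-strongly pretentious: hat-D_{beta,k}(f,g) < infinity (nonnegative series).\<close>
definition strongly_pretentious :: "real \<Rightarrow> nat \<Rightarrow> (nat \<Rightarrow> complex) \<Rightarrow> (nat \<Rightarrow> complex) \<Rightarrow> bool" where
  "strongly_pretentious \<beta> k f g \<longleftrightarrow> summable (Dterm \<beta> k f g)"

definition dirichlet_conv :: "(nat \<Rightarrow> complex) \<Rightarrow> (nat \<Rightarrow> complex) \<Rightarrow> nat \<Rightarrow> complex" where
  "dirichlet_conv f h n = (\<Sum>d | d dvd n. f d * h (n div d))"

text \<open>hat-H_Y(sigma) = sum_{p <= Y} sum_{k >= 1} |h(p^k)|/p^{k sigma} is convergent:
  finitely many primes, so convergence means each inner series converges.\<close>
definition hatH_convergent :: "(nat \<Rightarrow> complex) \<Rightarrow> real \<Rightarrow> real \<Rightarrow> bool" where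
  "hatH_convergent h Y \<sigma> \<longleftrightarrow>
     (\<forall>p. prime p \<and> real p \<le> Y \<longrightarrow>
        summable (\<lambda>j. norm (h (p ^ Suc j)) / real p powr (real (Suc j) * \<sigma>)))"

end

theory Submission
  imports Defs
begin



lemma gcd_prod_left:
  fixes m n d1 d2 :: nat assumes "coprime m n" "d1 dvd m" "d2 dvd n"
  shows "gcd (d1*d2) m = d1"
  by (metis assms(1,2,3) coprime_mult_right_iff dvd_mult_div_cancel
    gcd_mult_left_right_cancel gcd_nat.order_iff)

lemma divisors_coprime_split:
  fixes m n d :: nat assumes "coprime m n" "d dvd m*n"
  shows "d = gcd d m * gcd d n"
proof -
  obtain b c where bc: "d = b*c" "b dvd m" "c dvd n" using division_decomp[OF assms(2)] by blast
  have "gcd d m = b" using gcd_prod_left[OF assms(1) bc(2,3)] bc(1) by simp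
  moreover have "gcd d n = c" using gcd_prod_left[of n m c b] assms(1) bc by (simp add: coprime_commute mult.commute)
  ultimately show ?thesis using bc by simp
qed

lemma sum_divisors_coprime:
  fixes m n :: nat and F :: "nat \<Rightarrow> 'b::comm_monoid_add"
  assumes cop: "coprime m n" and m: "m > 0" and n: "n > 0"
  shows "sum F {d. d dvd m*n} = sum (\<lambda>(a,b). F (a*b)) ({d. d dvd m} \<times> {d. d dvd n})"
proof -
  have bij: "bij_betw (\<lambda>(a,b). a*b) ({d. d dvd m} \<times> {d. d dvd n}) {d. d dvd m*n}"
  proof (rule bij_betwI')
    fix x y assume x: "x \<in> {d. d dvd m} \<times> {d. d dvd n}" and y: "y \<in> {d. d dvd m} \<times> {d. d dvd n}"
    obtain a b where ab: "x = (a,b)" by force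
    obtain a' b' where ab': "y = (a',b')" by force
    show "((case x of (a, b) \<Rightarrow> a * b) = (case y of (a, b) \<Rightarrow> a * b)) = (x = y)"
    proof
      assume eq: "(case x of (a, b) \<Rightarrow> a * b) = (case y of (a, b) \<Rightarrow> a * b)"
      hence e: "a*b = a'*b'" using ab ab' by simp
      have cop': "coprime n m" using cop by (simp add: coprime_commute)
      have "a = gcd (a*b) m" using gcd_prod_left[OF cop] x ab by simp
      also have "\<dots> = gcd (a'*b') m" using e by simp
      also have "\<dots> = a'" using gcd_prod_left[OF cop] y ab' by simp
      finally have 1: "a = a'" .
      have "b = gcd (b*a) n" using gcd_prod_left[OF cop'] x ab by simp
      also have "\<dots> = gcd (b'*a') n" using e by (simp add: mult.commute)
      also have "\<dots> = b'" using gcd_prod_left[OF cop'] y ab' by simp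
      finally have 2: "b = b'" .
      show "x = y" using 1 2 ab ab' by simp
    qed simp
  next
    fix x assume "x \<in> {d. d dvd m} \<times> {d. d dvd n}"
    then show "(case x of (a, b) \<Rightarrow> a * b) \<in> {d. d dvd m * n}" by (auto intro: mult_dvd_mono)
  next
    fix d assume "d \<in> {d. d dvd m * n}"
    hence d: "d dvd m*n" by simp
    show "\<exists>x\<in>{d. d dvd m} \<times> {d. d dvd n}. d = (case x of (a, b) \<Rightarrow> a * b)"
      by (rule bexI[of _ "(gcd d m, gcd d n)"]) (use divisors_coprime_split[OF cop d] in auto)
  qed
  show ?thesis using sum.reindex_bij_betw[OF bij, of F] by (simp add: case_prod_beta')
qed

lemma div_pos_dvd: "(a::nat) dvd m \<Longrightarrow> m > 0 \<Longrightarrow> m div a > 0"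
  by (metis dvd_div_mult_self gr0I mult_0)

lemma h_one:
  assumes mg: "multiplicative g" and conv: "\<forall>n>0. g n = dirichlet_conv f h n" and mf: "multiplicative f"
  shows "h 1 = 1"
proof -
  have "g 1 = dirichlet_conv f h 1" using conv by simp
  also have "\<dots> = f 1 * h 1" by (simp add: dirichlet_conv_def)
  finally show ?thesis using mg mf by (simp add: multiplicative_def)
qed

lemma h_mult:
  assumes mf: "multiplicative f" and mg: "multiplicative g"
    and conv: "\<forall>n>0. g n = dirichlet_conv f h n"
  shows "coprime m n \<Longrightarrow> m > 0 \<Longrightarrow> n > 0 \<Longrightarrow> h (m*n) = h m * h n"
proof -
  have f1: "f 1 = 1" and fm: "\<And>a b. coprime a b \<Longrightarrow> f (a*b) = f a * f b"
    using mf by (auto simp: multiplicative_def)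
  have g1: "g 1 = 1" and gm: "\<And>a b. coprime a b \<Longrightarrow> g (a*b) = g a * g b"
    using mg by (auto simp: multiplicative_def)
  have key: "\<forall>m n. m*n = K \<longrightarrow> coprime m n \<longrightarrow> m>0 \<longrightarrow> n>0 \<longrightarrow> h(m*n) = h m * h n" for K
  proof (induction K rule: less_induct)
    case (less K)
    show ?case
    proof (intro allI impI)
      fix m n :: nat assume K: "m*n = K" and cop: "coprime m n" and m: "m > 0" and n: "n > 0"
      define D where "D = {d. d dvd m} \<times> {d. d dvd n}"
      define T where "T = (\<lambda>(a,b). f a * f b * h ((m div a) * (n div b)))"
      define U where "U = (\<lambda>(a,b). f a * f b * (h (m div a) * h (n div b)))"
      have finD: "finite D" unfolding D_def using m n by (auto intro: finite_divisors_nat)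
      have oneD: "(1,1) \<in> D" unfolding D_def by simp
      have "g (m*n) = (\<Sum>d\<in>{d. d dvd m*n}. f d * h (m*n div d))"
        using conv m n by (simp add: dirichlet_conv_def)
      also have "\<dots> = (\<Sum>(a,b)\<in>D. f (a*b) * h (m*n div (a*b)))"
        unfolding D_def by (rule sum_divisors_coprime[OF cop m n])
      also have "\<dots> = sum T D"
      proof (rule sum.cong[OF refl])
        fix x assume "x \<in> D"
        then obtain a b where x: "x = (a,b)" "a dvd m" "b dvd n" unfolding D_def by auto
        have "coprime a b" using cop x by (meson coprime_divisors)
        moreover have "m*n div (a*b) = (m div a) * (n div b)" using x
          by (metis div_mult_div_if_dvd)
        ultimately show "(case x of (a, b) \<Rightarrow> f (a * b) * h (m * n div (a * b))) = T x"
          unfolding T_def using x fm by simp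
      qed
      finally have gT: "g (m*n) = sum T D" .
      have "g m * g n = (\<Sum>a\<in>{d. d dvd m}. f a * h (m div a)) * (\<Sum>b\<in>{d. d dvd n}. f b * h (n div b))"
        using conv m n by (simp add: dirichlet_conv_def)
      also have "\<dots> = sum U D" unfolding D_def U_def
        by (simp add: sum_product sum.cartesian_product algebra_simps)
      finally have gU: "g m * g n = sum U D" .
      have TU: "T x = U x" if xD: "x \<in> D - {(1,1)}" for x
      proof -
        obtain a b where x: "x = (a,b)" "a dvd m" "b dvd n" "(a,b) \<noteq> (1,1)" using xD unfolding D_def by (cases x) auto
        have a0: "a > 0" "b > 0" using x m n by (auto intro: Nat.gr0I)
        have lt: "(m div a) * (n div b) < K"
        proof -
          have e1: "m div a * a = m" "n div b * b = n" using x by auto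
          have "K = (m div a * a) * (n div b * b)" using K e1 by simp
          hence e: "K = (m div a * (n div b)) * (a*b)" by (simp add: ac_simps)
          have ab: "a*b > 1"
          proof (cases "a > 1")
            case True
            have "a*b \<ge> a" using a0 by simp
            thus ?thesis using True by linarith
          next
            case False hence "a = 1" "b > 1" using x a0 by auto
            thus ?thesis by simp
          qed
          have pos: "m div a * (n div b) > 0" using x m n by (simp add: div_pos_dvd)
          show ?thesis using e ab pos by simp
        qed
        have cop2: "coprime (m div a) (n div b)" 
          by (rule coprime_divisors[OF _ _ cop]) (metis x(2) dvd_div_mult_self dvd_triv_left, metis x(3) dvd_div_mult_self dvd_triv_left)
        have "h ((m div a) * (n div b)) = h (m div a) * h (n div b)"
          using less.IH[OF lt] cop2 x m n by (auto simp: div_pos_dvd)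
        then show ?thesis unfolding T_def U_def x by simp
      qed
      have "sum T D = T (1,1) + sum T (D - {(1,1)})" using finD oneD by (simp add: sum.remove)
      moreover have "sum U D = U (1,1) + sum U (D - {(1,1)})" using finD oneD by (simp add: sum.remove)
      moreover have "sum T (D - {(1,1)}) = sum U (D - {(1,1)})" using TU by (rule sum.cong[OF refl])
      moreover have "g (m*n) = g m * g n" using gm cop by simp
      ultimately have "T (1,1) = U (1,1)" using gT gU by simp
      then show "h (m*n) = h m * h n" unfolding T_def U_def using f1 by simp
    qed
  qed
  then show "coprime m n \<Longrightarrow> m > 0 \<Longrightarrow> n > 0 \<Longrightarrow> h (m*n) = h m * h n" by blast
qed



lemma euler_bound:
  fixes a :: "nat \<Rightarrow> real" and N :: nat
  assumes nn: "\<And>n. a n \<ge> 0" and a1: "a 1 = 1"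
    and am: "\<And>m n. coprime m n \<Longrightarrow> m>0 \<Longrightarrow> n>0 \<Longrightarrow> a (m*n) = a m * a n"
  shows "finite P \<Longrightarrow> (\<forall>p\<in>P. prime p) \<Longrightarrow>
    sum a {m\<in>{1..N}. prime_factors m \<subseteq> P} \<le> (\<Prod>p\<in>P. \<Sum>j\<le>N. a (p^j))"
proof (induction P rule: finite_induct)
  case empty
  have sub: "{m\<in>{1..N}. prime_factors m \<subseteq> {}} \<subseteq> {1}"
    by (auto simp: prime_factorization_empty_iff)
  have "sum a {m\<in>{1..N}. prime_factors m \<subseteq> {}} \<le> sum a {1}"
    by (rule sum_mono2[OF _ sub]) (auto simp: nn)
  also have "sum a {1} = 1" using a1 by simp
  finally show ?case by simp
next
  case (insert q P)
  have q: "prime q" using insert.prems by simp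
  have Pp: "\<forall>p\<in>P. prime p" using insert.prems by simp
  define A' where "A' = {m\<in>{1..N}. prime_factors m \<subseteq> insert q P}"
  define A where "A = {m\<in>{1..N}. prime_factors m \<subseteq> P}"
  define v where "v m = multiplicity q m" for m
  define r where "r m = m div q ^ v m" for m
  define \<phi> where "\<phi> m = (v m, r m)" for m
  have q1: "q > 1" using q prime_gt_1_nat by blast
  have dec: "m = q ^ v m * r m" for m
    unfolding r_def v_def by (simp add: multiplicity_dvd)
  have ndvd: "\<not> q dvd r m" if "m > 0" for m
    unfolding r_def v_def using that q by (intro multiplicity_decompose) auto
  have inj: "inj_on \<phi> A'"
  proof (rule inj_onI)
    fix x y assume "\<phi> x = \<phi> y"
    hence "v x = v y" "r x = r y" unfolding \<phi>_def by auto
    thus "x = y" using dec[of x] dec[of y] by simp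
  qed
  have img: "\<phi> ` A' \<subseteq> {..N} \<times> A"
  proof
    fix y assume "y \<in> \<phi> ` A'"
    then obtain m where m: "m \<in> A'" "y = \<phi> m" by auto
    have m1: "m \<ge> 1" "m \<le> N" using m unfolding A'_def by auto
    have rpos: "r m > 0" using dec[of m] m1 by (metis gr0I mult_0_right not_one_le_zero)
    have "q ^ v m \<le> m" using dec[of m] rpos by (metis dvd_imp_le dvd_triv_left m1(1) not_one_le_zero gr0I)
    moreover have "v m < q ^ v m"
    proof -
      have "v m < 2 ^ v m" by simp
      also have "2 ^ v m \<le> q ^ v m" using q1 by (simp add: power_mono)
      finally show ?thesis .
    qed
    ultimately have vN: "v m \<le> N" using m1 by linarith
    have rle: "r m \<le> m" unfolding r_def by simp
    have "prime_factors (r m) \<subseteq> P"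
    proof
      fix p assume p: "p \<in> prime_factors (r m)"
      hence pp: "prime p" "p dvd r m" by (auto simp: in_prime_factors_iff)
      hence "p dvd m" using dec[of m] by (metis dvd_mult2 mult.commute)
      hence "p \<in> prime_factors m" using pp m1 by (auto simp: in_prime_factors_iff)
      hence "p \<in> insert q P" using m unfolding A'_def by auto
      moreover have "p \<noteq> q" using ndvd[of m] pp m1 by auto
      ultimately show "p \<in> P" by auto
    qed
    thus "y \<in> {..N} \<times> A" using m vN rpos rle m1 unfolding A_def \<phi>_def by auto
  qed
  have aeq: "a m = a (q ^ v m) * a (r m)" if "m \<in> A'" for m
  proof -
    have m1: "m \<ge> 1" using that unfolding A'_def by auto
    have rpos: "r m > 0" using dec[of m] m1 by (metis gr0I mult_0_right not_one_le_zero)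
    have "coprime (q ^ v m) (r m)"
      using ndvd[of m] m1 q by (simp add: coprime_power_left_iff prime_imp_coprime)
    hence "a (q ^ v m * r m) = a (q ^ v m) * a (r m)" using am rpos q1 by simp
    thus ?thesis using dec[of m] by simp
  qed
  have finA: "finite A" unfolding A_def by simp
  have "sum a A' = (\<Sum>m\<in>A'. a (q ^ fst (\<phi> m)) * a (snd (\<phi> m)))"
    using aeq unfolding \<phi>_def by simp
  also have "\<dots> = (\<Sum>x\<in>\<phi> ` A'. a (q ^ fst x) * a (snd x))"
    using sum.reindex[OF inj, of "\<lambda>x. a (q ^ fst x) * a (snd x)"] by simp
  also have "\<dots> \<le> (\<Sum>x\<in>{..N} \<times> A. a (q ^ fst x) * a (snd x))"
    by (rule sum_mono2) (use img finA nn in \<open>auto intro: mult_nonneg_nonneg\<close>)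
  also have "\<dots> = (\<Sum>j\<le>N. a (q^j)) * sum a A"
    by (simp add: sum_product sum.cartesian_product case_prod_beta')
  also have "\<dots> \<le> (\<Sum>j\<le>N. a (q^j)) * (\<Prod>p\<in>P. \<Sum>j\<le>N. a (p^j))"
    using insert.IH[OF Pp] unfolding A_def by (intro mult_left_mono) (auto intro: sum_nonneg nn)
  also have "\<dots> = (\<Prod>p\<in>insert q P. \<Sum>j\<le>N. a (p^j))" using insert.hyps by simp
  finally show ?case unfolding A'_def .
qed

lemma euler_bound':
  fixes a :: "nat \<Rightarrow> real" and N :: nat
  assumes nn: "\<And>n. a n \<ge> 0" and a1: "a 1 = 1"
    and am: "\<And>m n. coprime m n \<Longrightarrow> m>0 \<Longrightarrow> n>0 \<Longrightarrow> a (m*n) = a m * a n"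
  shows "sum a {1..N} \<le> (\<Prod>p\<in>{p. prime p \<and> p \<le> N}. \<Sum>j\<le>N. a (p^j))"
proof -
  have aux: "y \<le> N" if "1 \<le> x" "x \<le> N" "y dvd x" for x y :: nat
  proof -
    have "y \<le> x" using that by (intro dvd_imp_le) auto
    thus ?thesis using that by linarith
  qed
  have eq: "{m\<in>{1..N}. prime_factors m \<subseteq> {p. prime p \<and> p \<le> N}} = {1..N}"
    using aux by (auto simp: in_prime_factors_iff)
  have "sum a {m\<in>{1..N}. prime_factors m \<subseteq> {p. prime p \<and> p \<le> N}} \<le> (\<Prod>p\<in>{p. prime p \<and> p \<le> N}. \<Sum>j\<le>N. a (p^j))"
    by (rule euler_bound[OF nn a1 am]) auto
  then show ?thesis by (simp only: eq)
qed



lemma half_sum: "(\<Sum>i\<in>{1..j}. (1/2::real)^i) = 1 - (1/2)^j"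
  by (induction j) (auto simp: sum.cl_ivl_Suc)

lemma split_conv0:
  fixes F H :: "nat \<Rightarrow> complex"
  assumes F0: "F 0 = 1"
  shows "(\<Sum>i\<le>j. F i * H (j-i)) = H j + (\<Sum>i\<in>{1..j}. F i * H (j-i))"
  by (simp add: atMost_atLeast0 sum.atLeast_Suc_atMost F0)

lemma growth_bound:
  fixes F G H :: "nat \<Rightarrow> complex" and r :: real
  assumes r: "r > 0" and F0: "F 0 = 1" and H0: "H 0 = 1"
    and conv: "\<And>j. G j = (\<Sum>i\<le>j. F i * H (j-i))"
    and Fb: "\<And>i. i \<ge> 1 \<Longrightarrow> norm (F i) \<le> r^i" and Gb: "\<And>i. i \<ge> 1 \<Longrightarrow> norm (G i) \<le> r^i"
  shows "norm (H j) \<le> (2*r)^j"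
proof (induction j rule: less_induct)
  case (less j)
  show ?case
  proof (cases "j = 0")
    case True thus ?thesis using H0 by simp
  next
    case False
    have Hj: "H j = G j - (\<Sum>i\<in>{1..j}. F i * H (j-i))"
      using conv[of j] split_conv0[where F=F and H=H and j=j, OF F0] by simp
    have "norm (H j) \<le> norm (G j) + norm (\<Sum>i\<in>{1..j}. F i * H (j-i))"
      unfolding Hj by (rule norm_triangle_ineq4)
    also have "\<dots> \<le> norm (G j) + (\<Sum>i\<in>{1..j}. norm (F i) * norm (H (j-i)))"
      by (intro add_left_mono order.trans[OF norm_sum]) (simp add: norm_mult)
    also have "\<dots> \<le> r^j + (\<Sum>i\<in>{1..j}. r^i * (2*r)^(j-i))"
      by (intro add_mono sum_mono mult_mono) (use less Fb Gb False r in auto)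
    also have "(\<Sum>i\<in>{1..j}. r^i * (2*r)^(j-i)) = (\<Sum>i\<in>{1..j}. (2*r)^j * (1/2)^i)"
    proof (rule sum.cong[OF refl])
      fix i assume "i \<in> {1..j}"
      hence ij: "i + (j - i) = j" by auto
      have pj: "(2*r)^j = (2*r)^i * (2*r)^(j-i)" by (metis ij power_add)
      have "(2*r)^j * (1/2)^i = ((2*r)^i * (1/2)^i) * (2*r)^(j-i)"
        unfolding pj by (simp only: ac_simps)
      also have "(2*r)^i * (1/2)^i = r^i" unfolding power_mult_distrib[symmetric] by simp
      finally show "r^i * (2*r)^(j-i) = (2*r)^j * (1/2)^i" by simp
    qed
    also have "\<dots> = (2*r)^j * (1 - (1/2)^j)" by (subst sum_distrib_left[symmetric], subst half_sum) (rule refl)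
    also have "r^j + (2*r)^j * (1 - (1/2)^j) = (2*r)^j"
      by (simp add: power_mult_distrib field_simps)
    finally show ?thesis by simp
  qed
qed

lemma small_bound:
  fixes F G H :: "nat \<Rightarrow> complex" and s :: real
  assumes s: "s > 0" and F0: "F 0 = 1" and H0: "H 0 = 1"
    and conv: "\<And>j. G j = (\<Sum>i\<le>j. F i * H (j-i))"
    and Fb: "\<And>i. i \<ge> 1 \<Longrightarrow> norm (F i) \<le> s^i"
  shows "j \<ge> 1 \<Longrightarrow> norm (H j) / s^j \<le> fact j * (\<Sum>i\<in>{1..j}. norm (G i - F i) / s^i)"
proof (induction j rule: less_induct)
  case (less j)
  define e where "e i = norm (G i - F i) / s^i" for i
  define S where "S j = (\<Sum>i\<in>{1..j}. e i)" for j
  have enn: "e i \<ge> 0" for i unfolding e_def using s by simp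
  have Smono: "S i \<le> S j" if "i \<le> j" for i j
    unfolding S_def by (rule sum_mono2) (use that enn in auto)
  have j1: "j \<ge> 1" by fact
  have ins: "{1..j} = insert j {1..<j}" using j1 by auto
  have "(\<Sum>i\<in>{1..j}. F i * H (j-i)) = F j + (\<Sum>i\<in>{1..<j}. F i * H (j-i))"
    by (subst ins) (simp add: H0)
  hence Hj: "H j = (G j - F j) - (\<Sum>i\<in>{1..<j}. F i * H (j-i))"
    using conv[of j] split_conv0[where F=F and H=H and j=j, OF F0] by simp
  have "norm (H j) / s^j \<le> (norm (G j - F j) + norm (\<Sum>i\<in>{1..<j}. F i * H (j-i))) / s^j"
    unfolding Hj using s by (intro divide_right_mono norm_triangle_ineq4) auto
  also have "\<dots> \<le> (norm (G j - F j) + (\<Sum>i\<in>{1..<j}. norm (F i) * norm (H (j-i)))) / s^j"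
    using s by (intro divide_right_mono add_left_mono order.trans[OF norm_sum]) (auto simp add: norm_mult)
  also have "\<dots> = e j + (\<Sum>i\<in>{1..<j}. (norm (F i) / s^i) * (norm (H (j-i)) / s^(j-i)))"
  proof -
    have "(\<Sum>i\<in>{1..<j}. norm (F i) * norm (H (j-i))) / s^j
          = (\<Sum>i\<in>{1..<j}. (norm (F i) / s^i) * (norm (H (j-i)) / s^(j-i)))"
      unfolding sum_divide_distrib
    proof (rule sum.cong[OF refl])
      fix i assume "i \<in> {1..<j}"
      hence "s^j = s^i * s^(j-i)" by (simp add: power_add[symmetric])
      thus "norm (F i) * norm (H (j-i)) / s^j = (norm (F i) / s^i) * (norm (H (j-i)) / s^(j-i))"
        by simp
    qed
    thus ?thesis unfolding e_def by (simp add: add_divide_distrib)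
  qed
  also have "\<dots> \<le> e j + (\<Sum>i\<in>{1..<j}. 1 * (fact (j-1) * S j))"
  proof (rule add_left_mono, rule sum_mono)
    fix i assume i: "i \<in> {1..<j}"
    have a: "norm (F i) / s^i \<le> 1" using Fb[of i] i s by simp
    have ih: "norm (H (j-i)) / s^(j-i) \<le> fact (j-i) * (\<Sum>i\<in>{1..j-i}. norm (G i - F i) / s^i)"
      using i by (intro less.IH) auto
    have "norm (H (j-i)) / s^(j-i) \<le> fact (j-i) * S (j-i)"
      using ih unfolding S_def e_def .
    also have "\<dots> \<le> fact (j-1) * S j"
    proof (rule mult_mono)
      show "fact (j-i) \<le> (fact (j-1) :: real)" using i by (intro fact_mono) auto
      show "S (j-i) \<le> S j" by (rule Smono) auto
      show "0 \<le> (fact (j-1) :: real)" by simp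
      show "0 \<le> S (j-i)" unfolding S_def by (intro sum_nonneg enn)
    qed
    finally have b: "norm (H (j-i)) / s^(j-i) \<le> fact (j-1) * S j" .
    have c: "0 \<le> norm (H (j-i)) / s^(j-i)" using s by simp
    show "(norm (F i) / s^i) * (norm (H (j-i)) / s^(j-i)) \<le> 1 * (fact (j-1) * S j)"
      by (rule mult_mono[OF a b]) (use c in simp_all)
  qed
  also have "\<dots> = e j + real (j-1) * fact (j-1) * S j" by simp
  also have "\<dots> \<le> S j + real (j-1) * fact (j-1) * S j"
    unfolding S_def using j1 enn by (intro add_right_mono member_le_sum) auto
  also have "\<dots> = (1 + real (j-1) * fact (j-1)) * S j" by (simp add: algebra_simps)
  also have "\<dots> \<le> fact j * S j"
  proof (rule mult_right_mono)
    have "fact j = real j * fact (j-1)" using j1 by (simp add: fact_reduce)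
    also have "\<dots> = fact (j-1) + real (j-1) * fact (j-1)" using j1 by (simp add: of_nat_diff algebra_simps)
    finally show "1 + real (j-1) * fact (j-1) \<le> (fact j :: real)" by simp
    show "0 \<le> S j" unfolding S_def by (intro sum_nonneg enn)
  qed
  finally show ?case unfolding S_def e_def .
qed



lemma pp_conv:
  assumes p: "prime p" and conv: "\<forall>n>0. g n = dirichlet_conv f h n"
  shows "g (p^j) = (\<Sum>i\<le>j. f (p^i) * h (p^(j-i)))"
proof -
  have p1: "p > 1" using p prime_gt_1_nat by blast
  have "g (p^j) = (\<Sum>d\<in>{d. d dvd p^j}. f d * h (p^j div d))"
    using conv p1 by (simp add: dirichlet_conv_def)
  also have "{d. d dvd p^j} = (\<lambda>i. p^i) ` {..j}"
    using divides_primepow_nat[OF p] by auto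
  also have "(\<Sum>d\<in>(\<lambda>i. p^i) ` {..j}. f d * h (p^j div d)) = (\<Sum>i\<le>j. f (p^i) * h (p^j div p^i))"
  proof (rule sum.reindex[unfolded comp_def])
    show "inj_on (\<lambda>i. p^i) {..j}" using p1 by (auto simp: inj_on_def power_inject_exp)
  qed
  also have "\<dots> = (\<Sum>i\<le>j. f (p^i) * h (p^(j-i)))"
    using p1 by (intro sum.cong refl) (simp add: power_diff)
  finally show ?thesis .
qed

lemma pw: "p > 0 \<Longrightarrow> real (p^j) powr x = (real p powr x)^j"
  by (simp add: powr_power powr_realpow[symmetric] powr_powr mult.commute)

lemma tail_gp:
  fixes q :: real assumes "0 \<le> q" "q \<le> 1/2"
  shows "(\<Sum>j=m..N. q^j) \<le> 2 * q^m"
proof (cases "N < m")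
  case True thus ?thesis using assms by simp
next
  case False
  have q1: "q \<noteq> 1" "1 - q > 0" using assms by auto
  have "(\<Sum>j=m..N. q^j) = (q^m - q^Suc N) / (1 - q)" using False q1 by (simp add: sum_gp)
  also have "\<dots> \<le> q^m / (1 - q)" using q1 assms by (intro divide_right_mono) auto
  also have "\<dots> \<le> q^m / (1/2)" using q1 assms by (intro divide_left_mono) auto
  finally show ?thesis by simp
qed

lemma prime_sum_bound:
  fixes f g h :: "nat \<Rightarrow> complex" and \<delta> \<sigma> \<beta> :: real and k N p :: nat
  assumes mf: "multiplicative f" and mg: "multiplicative g" and conv: "\<forall>n>0. g n = dirichlet_conv f h n"
    and p: "prime p"
    and fb: "\<And>i. i \<ge> 1 \<Longrightarrow> norm (f (p^i)) \<le> real (p^i) powr \<delta>"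
    and gb: "\<And>i. i \<ge> 1 \<Longrightarrow> norm (g (p^i)) \<le> real (p^i) powr \<delta>"
    and q: "2 * real p powr (\<delta> - \<sigma>) \<le> 1/2" and ds: "\<delta> < \<sigma>" and bs: "\<beta> \<le> \<sigma>" and k: "k \<ge> 1"
  shows "(\<Sum>j\<in>{1..N}. norm (h (p^j)) / real (p^j) powr \<sigma>)
           \<le> real k * fact k * Dterm \<beta> k f g p + 2 * (2 * real p powr (\<delta>-\<sigma>))^(k+1)"
proof -
  define F where "F i = f (p^i)" for i
  define G where "G i = g (p^i)" for i
  define H where "H i = h (p^i)" for i
  define r where "r = real p powr \<delta>"
  define s where "s = real p powr \<sigma>"
  define qq where "qq = 2 * real p powr (\<delta> - \<sigma>)"
  have p0: "p > 0" using prime_gt_0_nat[OF p] .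
  have p1: "real p \<ge> 1" using prime_gt_1_nat[OF p] by simp
  have r0: "r > 0" and s0: "s > 0" unfolding r_def s_def using p0 by auto
  have F0: "F 0 = 1" using mf unfolding F_def multiplicative_def by simp
  have H0: "H 0 = 1" unfolding H_def using h_one[OF mg conv mf] by simp
  have cv: "G j = (\<Sum>i\<le>j. F i * H (j-i))" for j
    unfolding F_def G_def H_def using pp_conv[OF p conv] .
  have Fb: "norm (F i) \<le> r^i" if "i \<ge> 1" for i
    using fb[OF that] unfolding F_def r_def pw[OF p0] .
  have Gb: "norm (G i) \<le> r^i" if "i \<ge> 1" for i
    using gb[OF that] unfolding G_def r_def pw[OF p0] .
  have rs: "r \<le> s" unfolding r_def s_def using p1 ds by (intro powr_mono) auto
  have Fs: "norm (F i) \<le> s^i" if "i \<ge> 1" for i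
    using Fb[OF that] power_mono[OF rs, of i] r0 by linarith
  have grow: "norm (H j) \<le> (2*r)^j" for j
    by (rule growth_bound[OF r0 F0 H0 cv Fb Gb])
  have small: "norm (H j) / s^j \<le> fact j * (\<Sum>i\<in>{1..j}. norm (G i - F i) / s^i)" if "j \<ge> 1" for j
    by (rule small_bound[OF s0 F0 H0 cv Fs that])
  have aeq: "norm (h (p^j)) / real (p^j) powr \<sigma> = norm (H j) / s^j" for j
    unfolding H_def s_def pw[OF p0] ..
  have qq: "qq = 2 * r / s" unfolding qq_def r_def s_def by (simp add: powr_diff)
  have qq0: "qq \<ge> 0" unfolding qq_def by simp
  have tail: "norm (H j) / s^j \<le> qq^j" for j
  proof -
    have "norm (H j) / s^j \<le> (2*r)^j / s^j" using grow[of j] s0 by (intro divide_right_mono) auto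
    also have "\<dots> = qq^j" unfolding qq by (simp add: power_divide)
    finally show ?thesis .
  qed
  define D where "D = Dterm \<beta> k f g p"
  have Dsum: "(\<Sum>i\<in>{1..j}. norm (G i - F i) / s^i) \<le> D" if "j \<le> k" for j
  proof -
    have "(\<Sum>i\<in>{1..j}. norm (G i - F i) / s^i) \<le> (\<Sum>i\<in>{1..k}. norm (G i - F i) / s^i)"
      using that s0 by (intro sum_mono2) auto
    also have "\<dots> \<le> (\<Sum>i\<in>{1..k}. norm (f (p^i) - g (p^i)) / real p powr (real i * \<beta>))"
    proof (rule sum_mono)
      fix i assume "i \<in> {1..k}"
      have "real p powr (real i * \<beta>) \<le> s^i"
        unfolding s_def using powr_power[of "real p" \<sigma> i] p0 p1 bs
        by (auto intro!: powr_mono mult_left_mono)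
      moreover have "real p powr (real i * \<beta>) > 0" using p0 by simp
      ultimately have "norm (f (p^i) - g (p^i)) / s^i \<le> norm (f (p^i) - g (p^i)) / real p powr (real i * \<beta>)"
        using s0 by (intro divide_left_mono) auto
      thus "norm (G i - F i) / s^i \<le> norm (f (p^i) - g (p^i)) / real p powr (real i * \<beta>)"
        unfolding F_def G_def by (simp add: norm_minus_commute)
    qed
    also have "\<dots> = D" unfolding D_def Dterm_def using p by simp
    finally show ?thesis .
  qed
  have D0: "D \<ge> 0" using Dsum[of 0] by simp
  have "(\<Sum>j\<in>{1..N}. norm (H j) / s^j) \<le> (\<Sum>j\<in>{1..k} \<union> {Suc k..N}. norm (H j) / s^j)"
    using s0 by (intro sum_mono2) auto
  also have "\<dots> = (\<Sum>j\<in>{1..k}. norm (H j) / s^j) + (\<Sum>j\<in>{Suc k..N}. norm (H j) / s^j)"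
    by (intro sum.union_disjoint) auto
  also have "(\<Sum>j\<in>{1..k}. norm (H j) / s^j) \<le> (\<Sum>j\<in>{1..k}. fact k * D)"
  proof (rule sum_mono)
    fix j assume j: "j \<in> {1..k}"
    have "norm (H j) / s^j \<le> fact j * (\<Sum>i\<in>{1..j}. norm (G i - F i) / s^i)" using small j by auto
    also have "\<dots> \<le> fact k * D"
      using j D0 s0 by (intro mult_mono fact_mono Dsum) (auto intro!: sum_nonneg)
    finally show "norm (H j) / s^j \<le> fact k * D" .
  qed
  also have "(\<Sum>j\<in>{1..k}. fact k * D) = real k * fact k * D" by simp
  also have "(\<Sum>j\<in>{Suc k..N}. norm (H j) / s^j) \<le> (\<Sum>j\<in>{Suc k..N}. qq^j)"
    by (intro sum_mono tail)
  also have "\<dots> \<le> 2 * qq^(Suc k)" using qq0 q unfolding qq_def by (intro tail_gp) auto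
  finally show ?thesis unfolding aeq D_def qq_def by simp
qed



lemma swap_divisor_sum:
  fixes F :: "nat \<Rightarrow> nat \<Rightarrow> 'b::comm_monoid_add"
  shows "(\<Sum>n\<in>{1..N}. \<Sum>d\<in>{d. d dvd n}. F d (n div d)) = (\<Sum>m\<in>{1..N}. \<Sum>e\<in>{1..N div m}. F e m)"
proof -
  have fin1: "finite {d. d dvd n}" if "n \<in> {1..N}" for n using that by (auto intro: finite_divisors_nat)
  have "(\<Sum>n\<in>{1..N}. \<Sum>d\<in>{d. d dvd n}. F d (n div d)) = (\<Sum>(n,d)\<in>(SIGMA n:{1..N}. {d. d dvd n}). F d (n div d))"
    by (rule sum.Sigma) (use fin1 in auto)
  also have "\<dots> = (\<Sum>(m,e)\<in>(SIGMA m:{1..N}. {1..N div m}). F e m)"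
  proof (rule sum.reindex_bij_witness[where i="\<lambda>(m,e). (e*m, e)" and j="\<lambda>(n,d). (n div d, d)"])
    fix y assume y: "y \<in> (SIGMA n:{1..N}. {d. d dvd n})"
    then obtain n d where yd: "y = (n,d)" "n \<ge> 1" "n \<le> N" "d dvd n" by auto
    have d0: "d > 0" using yd by (auto intro: Nat.gr0I)
    have nd: "d * (n div d) = n" using yd by simp
    show "(\<lambda>(m,e). (e*m, e)) ((\<lambda>(n,d). (n div d, d)) y) = y" using yd nd by (auto simp: mult.commute)
    have m1: "n div d > 0" using yd by (intro div_pos_dvd) auto
    have "d \<le> N div (n div d)" using nd yd m1 less_eq_div_iff_mult_less_eq[of "n div d" d N] by simp
    moreover have "n div d \<le> N" using yd by (meson div_le_dividend le_trans)
    ultimately show "(\<lambda>(n,d). (n div d, d)) y \<in> (SIGMA m:{1..N}. {1..N div m})"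
      using yd m1 d0 by auto
    show "(case (\<lambda>(n,d). (n div d, d)) y of (m, e) \<Rightarrow> F e m) = (case y of (n, d) \<Rightarrow> F d (n div d))"
      using yd by auto
  next
    fix x assume x: "x \<in> (SIGMA m:{1..N}. {1..N div m})"
    then obtain m e where xe: "x = (m,e)" "m \<ge> 1" "m \<le> N" "e \<ge> 1" "e \<le> N div m" by auto
    have em: "e*m \<le> N" using xe less_eq_div_iff_mult_less_eq[of m e N] by simp
    show "(\<lambda>(n,d). (n div d, d)) ((\<lambda>(m,e). (e*m, e)) x) = x" using xe by auto
    show "(\<lambda>(m,e). (e*m, e)) x \<in> (SIGMA n:{1..N}. {d. d dvd n})" using xe em by auto
  qed
  also have "\<dots> = (\<Sum>m\<in>{1..N}. \<Sum>e\<in>{1..N div m}. F e m)"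
    by (rule sum.Sigma[symmetric]) auto
  finally show ?thesis .
qed



lemma powr_pow_nat: "(real n powr e)^(Suc m) = real n powr (real (Suc m) * e)"
proof (cases "n = 0")
  case False
  hence "real n \<noteq> 0" by simp
  from powr_power[OF this, of e "Suc m"] show ?thesis by simp
qed simp

lemma Dterm_nonneg: "Dterm \<beta> k f g p \<ge> 0"
  unfolding Dterm_def by (auto intro!: sum_nonneg divide_nonneg_nonneg)

theorem theorem3:
  fixes f g h :: "nat \<Rightarrow> complex" and \<alpha> \<beta> \<delta> \<sigma> :: real and k :: nat
  assumes "multiplicative f" and "multiplicative g"
    and "(\<lambda>x. S f x) \<in> O[at_top](\<lambda>x. complex_of_real (x powr \<alpha>))"
    and "k \<ge> 1" and "strongly_pretentious \<beta> k f g"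
    and "\<delta> > 0"
    and "(\<lambda>n. norm (f n)) \<in> o(\<lambda>n. real n powr \<delta>)"
    and "(\<lambda>n. norm (g n)) \<in> o(\<lambda>n. real n powr \<delta>)"
    and "\<forall>n>0. g n = dirichlet_conv f h n"
    and "\<sigma> > 1 / real (k + 1) + \<delta>" and "\<sigma> \<ge> max \<alpha> \<beta>"
  shows "\<exists>Y>0. hatH_convergent h Y \<sigma> \<longrightarrow>
           (\<lambda>x. S g x) \<in> O[at_top](\<lambda>x. complex_of_real (x powr \<sigma>))"
proof -
  note mf = assms(1) and mg = assms(2) and conv = assms(9)
  have k1: "k \<ge> 1" by (rule assms(4))
  have d0: "\<delta> > 0" by (rule assms(6))
  have kpos: "1 / real (k+1) > 0" by simp
  have th0: "\<sigma> - \<delta> > 0" using assms(10) kpos by linarith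
  have kth: "real (k+1) * (\<sigma> - \<delta>) > 1"
  proof -
    have "1 / real (k+1) < \<sigma> - \<delta>" using assms(10) by linarith
    thus ?thesis by (simp add: field_simps)
  qed
  have s0: "\<sigma> > 0" using th0 d0 by linarith
  have ab: "\<alpha> \<le> \<sigma>" "\<beta> \<le> \<sigma>" using assms(11) by auto
  obtain N1 where N1: "\<And>n. n \<ge> N1 \<Longrightarrow> norm (f n) \<le> real n powr \<delta>"
  proof -
    have "eventually (\<lambda>n. norm (norm (f n)) \<le> 1 * norm (real n powr \<delta>)) at_top"
      by (rule landau_o.smallD[OF assms(7)]) simp
    then obtain N where "\<And>n. n \<ge> N \<Longrightarrow> norm (norm (f n)) \<le> 1 * norm (real n powr \<delta>)"
      by (auto simp: eventually_at_top_linorder)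
    thus ?thesis using that by auto
  qed
  obtain N2 where N2: "\<And>n. n \<ge> N2 \<Longrightarrow> norm (g n) \<le> real n powr \<delta>"
  proof -
    have "eventually (\<lambda>n. norm (norm (g n)) \<le> 1 * norm (real n powr \<delta>)) at_top"
      by (rule landau_o.smallD[OF assms(8)]) simp
    then obtain N where "\<And>n. n \<ge> N \<Longrightarrow> norm (norm (g n)) \<le> 1 * norm (real n powr \<delta>)"
      by (auto simp: eventually_at_top_linorder)
    thus ?thesis using that by auto
  qed
  define N3 where "N3 = nat \<lceil>4 powr (1 / (\<sigma> - \<delta>))\<rceil>"
  have q_ok: "2 * real p powr (\<delta> - \<sigma>) \<le> 1/2" if "p \<ge> N3" "p > 0" for p :: nat
  proof -
    have "real p \<ge> 4 powr (1 / (\<sigma> - \<delta>))"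
      using that(1) unfolding N3_def by (meson le_trans nat_ceiling_le_eq of_nat_le_iff real_nat_ceiling_ge)
    hence "real p powr (\<sigma> - \<delta>) \<ge> (4 powr (1 / (\<sigma> - \<delta>))) powr (\<sigma> - \<delta>)"
      using th0 by (intro powr_mono2) auto
    also have "(4 powr (1 / (\<sigma> - \<delta>))) powr (\<sigma> - \<delta>) = 4" using th0 by (simp add: powr_powr)
    finally have P4: "real p powr (\<sigma> - \<delta>) \<ge> 4" .
    have u0: "real p powr (\<delta> - \<sigma>) \<ge> 0" by simp
    have "4 * real p powr (\<delta> - \<sigma>) \<le> real p powr (\<sigma> - \<delta>) * real p powr (\<delta> - \<sigma>)"
      using P4 u0 by (rule mult_right_mono)
    also have "\<dots> = 1" using that(2) by (simp add: powr_add[symmetric])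
    finally show ?thesis by simp
  qed
  define Y1 where "Y1 = Suc (max (max N1 N2) N3)"
  show ?thesis
  proof (intro exI[of _ "real Y1"] conjI impI)
    show "real Y1 > 0" unfolding Y1_def by simp
    assume hc: "hatH_convergent h (real Y1) \<sigma>"
    define a where "a m = norm (h m) / real m powr \<sigma>" for m
    define c where "c n = real k * fact k * Dterm \<beta> k f g n + 2 * (2 * real n powr (\<delta>-\<sigma>))^(k+1)" for n
    define A where "A p = suminf (\<lambda>j. a (p ^ Suc j))" for p
    define b where "b n = (if prime n then (if n \<le> Y1 then A n else c n) else 0)" for n
    have ann: "a n \<ge> 0" for n unfolding a_def by simp
    have a1: "a 1 = 1" unfolding a_def using h_one[OF mg conv mf] by simp
    have am: "a (m*n) = a m * a n" if "coprime m n" "m > 0" "n > 0" for m n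
    proof -
      have "h (m*n) = h m * h n" by (rule h_mult[OF mf mg conv that])
      moreover have "real (m*n) powr \<sigma> = real m powr \<sigma> * real n powr \<sigma>"
        by (simp add: powr_mult)
      ultimately show ?thesis unfolding a_def by (simp add: norm_mult)
    qed
    have cnn: "c n \<ge> 0" for n unfolding c_def using Dterm_nonneg[of \<beta> k f g n] by simp
    have csum: "summable c"
    proof -
      have s1: "summable (Dterm \<beta> k f g)" using assms(5) unfolding strongly_pretentious_def .
      have e: "(2 * real n powr (\<delta>-\<sigma>))^(k+1) = 2^(k+1) * real n powr (real (k+1) * (\<delta>-\<sigma>))" for n
        using powr_pow_nat[of n "\<delta>-\<sigma>" k] by (simp add: power_mult_distrib)
      have "summable (\<lambda>n. real n powr (real (k+1) * (\<delta>-\<sigma>)))"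
        using kth by (subst summable_real_powr_iff) (simp add: algebra_simps)
      hence s2: "summable (\<lambda>n. (2 * real n powr (\<delta>-\<sigma>))^(k+1))"
        unfolding e by (rule summable_mult)
      show ?thesis unfolding c_def
        by (intro summable_add summable_mult s1 s2)
    qed
    have apow: "a (p ^ Suc j) = norm (h (p ^ Suc j)) / real p powr (real (Suc j) * \<sigma>)" if "p > 0" for p j
      unfolding a_def pw[OF that] using powr_power[of "real p" \<sigma> "Suc j"] that by simp
    have hsum: "summable (\<lambda>j. a (p ^ Suc j))" if "prime p" "p \<le> Y1" for p
    proof -
      have p0: "p > 0" using that prime_gt_0_nat by blast
      have "summable (\<lambda>j. norm (h (p ^ Suc j)) / real p powr (real (Suc j) * \<sigma>))"
        using hc that unfolding hatH_convergent_def by auto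
      thus ?thesis using apow[OF p0] by simp
    qed
    have bnn: "b n \<ge> 0" for n
      unfolding b_def A_def using hsum cnn ann by (auto intro!: suminf_nonneg)
    have bsum: "summable b"
    proof (rule summable_comparison_test'[OF csum])
      fix n assume "n \<ge> Suc Y1"
      thus "norm (b n) \<le> c n" unfolding b_def using cnn by auto
    qed
    have pb: "(\<Sum>j\<in>{1..N}. a (p^j)) \<le> b p" if p: "prime p" for p N
    proof (cases "p \<le> Y1")
      case True
      have "(\<Sum>j\<in>{1..N}. a (p^j)) = (\<Sum>j<N. a (p ^ Suc j))"
        using sum.atLeast1_atMost_eq[of "\<lambda>j. a (p^j)" N] by simp
      also have "\<dots> \<le> A p" unfolding A_def
        by (rule sum_le_suminf[OF hsum[OF p True]]) (auto intro: ann)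
      finally show ?thesis unfolding b_def using p True by simp
    next
      case False
      have p0: "p > 0" using p prime_gt_0_nat by blast
      have pge: "p \<ge> N1" "p \<ge> N2" "p \<ge> N3" using False unfolding Y1_def by auto
      have ple: "p \<le> p ^ i" if "i \<ge> 1" for i using that p0 by (simp add: self_le_power)
      have fb: "norm (f (p^i)) \<le> real (p^i) powr \<delta>" if "i \<ge> 1" for i
        using N1 ple[OF that] pge by (meson le_trans)
      have gb: "norm (g (p^i)) \<le> real (p^i) powr \<delta>" if "i \<ge> 1" for i
        using N2 ple[OF that] pge by (meson le_trans)
      have "(\<Sum>j\<in>{1..N}. a (p^j)) \<le> c p"
        unfolding a_def c_def
        by (rule prime_sum_bound[OF mf mg conv p fb gb q_ok[OF pge(3) p0]]) (use th0 ab k1 in auto)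
      thus ?thesis unfolding b_def using p False by simp
    qed
    define B where "B = exp (suminf b)"
    have Bbound: "sum a {1..N} \<le> B" for N
    proof -
      let ?P = "{p. prime p \<and> p \<le> N}"
      have "sum a {1..N} \<le> (\<Prod>p\<in>?P. \<Sum>j\<le>N. a (p^j))"
        by (rule euler_bound'[OF ann a1 am]) auto
      also have "\<dots> \<le> (\<Prod>p\<in>?P. exp (b p))"
      proof (rule prod_mono)
        fix p assume "p \<in> ?P"
        hence p: "prime p" by simp
        have "(\<Sum>j\<le>N. a (p^j)) = a 1 + (\<Sum>j\<in>{1..N}. a (p^j))"
          by (simp add: atMost_atLeast0 sum.atLeast_Suc_atMost)
        also have "\<dots> \<le> 1 + b p" using pb[OF p, of N] a1 by simp
        also have "\<dots> \<le> exp (b p)" by (rule exp_ge_add_one_self)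
        finally show "0 \<le> (\<Sum>j\<le>N. a (p^j)) \<and> (\<Sum>j\<le>N. a (p^j)) \<le> exp (b p)"
          using ann by (auto intro: sum_nonneg)
      qed
      also have "\<dots> = exp (sum b ?P)" by (simp add: exp_sum)
      also have "\<dots> \<le> B" unfolding B_def
        by (subst exp_le_cancel_iff) (rule sum_le_suminf[OF bsum], auto intro: bnn)
      finally show ?thesis .
    qed
    obtain cf where cf: "cf > 0" and evf: "eventually (\<lambda>x. norm (S f x) \<le> cf * norm (complex_of_real (x powr \<alpha>))) at_top"
      using landau_o.bigE[OF assms(3)] by blast
    obtain x0 where x0: "\<And>x. x \<ge> x0 \<Longrightarrow> norm (S f x) \<le> cf * norm (complex_of_real (x powr \<alpha>))"
      using evf by (auto simp: eventually_at_top_linorder)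
    define x1 where "x1 = max x0 1"
    define M where "M = (\<Sum>n\<in>{1..nat \<lfloor>x1\<rfloor>}. norm (f n))"
    define C2 where "C2 = cf + M"
    have M0: "M \<ge> 0" unfolding M_def by (auto intro: sum_nonneg)
    have Sfb: "norm (S f y) \<le> C2 * y powr \<sigma>" if y1: "y \<ge> 1" for y
    proof (cases "y \<ge> x1")
      case True
      hence "norm (S f y) \<le> cf * y powr \<alpha>" using x0[of y] unfolding x1_def by simp
      also have "\<dots> \<le> cf * y powr \<sigma>" using cf y1 ab by (intro mult_left_mono powr_mono) auto
      also have "\<dots> \<le> C2 * y powr \<sigma>" unfolding C2_def using M0 by (intro mult_right_mono) auto
      finally show ?thesis .
    next
      case False
      have "norm (S f y) \<le> (\<Sum>n\<in>{1..nat \<lfloor>y\<rfloor>}. norm (f n))"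
        unfolding S_def by (rule norm_sum)
      also have "\<dots> \<le> M"
      proof -
        have "nat \<lfloor>y\<rfloor> \<le> nat \<lfloor>x1\<rfloor>" using False by (intro nat_mono floor_mono) simp
        thus ?thesis unfolding M_def by (intro sum_mono2) auto
      qed
      also have "\<dots> \<le> M * y powr \<sigma>" using M0 y1 s0
        by (simp add: ge_one_powr_ge_zero mult_le_cancel_left1)
      also have "\<dots> \<le> C2 * y powr \<sigma>" unfolding C2_def using cf by (intro mult_right_mono) auto
      finally show ?thesis .
    qed
    have Sg: "S g x = (\<Sum>m\<in>{1..nat \<lfloor>x\<rfloor>}. h m * S f (x / real m))" if x1: "x \<ge> 1" for x
    proof -
      define N where "N = nat \<lfloor>x\<rfloor>"
      have fl: "nat \<lfloor>x / real m\<rfloor> = N div m" if "m > 0" for m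
      proof -
        have "\<lfloor>x / real m\<rfloor> = \<lfloor>x\<rfloor> div int m"
          using floor_divide_real_eq_div[of "int m" x] by simp
        thus ?thesis unfolding N_def using x1 by (simp add: nat_div_distrib)
      qed
      have "S g x = (\<Sum>n\<in>{1..N}. \<Sum>d\<in>{d. d dvd n}. f d * h (n div d))"
        unfolding S_def N_def using conv by (intro sum.cong) (auto simp: dirichlet_conv_def)
      also have "\<dots> = (\<Sum>m\<in>{1..N}. \<Sum>e\<in>{1..N div m}. f e * h m)"
        by (rule swap_divisor_sum)
      also have "\<dots> = (\<Sum>m\<in>{1..N}. h m * S f (x / real m))"
        unfolding S_def by (intro sum.cong refl) (auto simp: fl sum_distrib_left mult.commute)
      finally show ?thesis unfolding N_def .
    qed
    show "(\<lambda>x. S g x) \<in> O[at_top](\<lambda>x. complex_of_real (x powr \<sigma>))"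
    proof (rule bigoI[where c="C2 * B"])
      show "eventually (\<lambda>x. norm (S g x) \<le> C2 * B * norm (complex_of_real (x powr \<sigma>))) at_top"
        using eventually_ge_at_top[of "1::real"]
      proof eventually_elim
        case (elim x)
        define N where "N = nat \<lfloor>x\<rfloor>"
        have xm: "x / real m \<ge> 1" if "m \<in> {1..N}" for m
        proof -
          have "real m \<le> real N" using that by auto
          also have "real N \<le> x" unfolding N_def using elim by linarith
          finally show ?thesis using that by auto
        qed
        have "norm (S g x) \<le> (\<Sum>m\<in>{1..N}. norm (h m) * norm (S f (x / real m)))"
          unfolding Sg[OF elim] N_def[symmetric] by (rule order.trans[OF norm_sum]) (simp add: norm_mult)
        also have "\<dots> \<le> (\<Sum>m\<in>{1..N}. norm (h m) * (C2 * (x / real m) powr \<sigma>))"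
          by (intro sum_mono mult_left_mono Sfb xm) auto
        also have "\<dots> = C2 * x powr \<sigma> * sum a {1..N}"
          unfolding a_def sum_distrib_left
          by (intro sum.cong refl) (use elim in \<open>simp add: powr_divide\<close>)
        also have "\<dots> \<le> C2 * x powr \<sigma> * B"
          using M0 cf unfolding C2_def by (intro mult_left_mono Bbound) auto
        also have "\<dots> = C2 * B * norm (complex_of_real (x powr \<sigma>))" by simp
        finally show ?case .
      qed
    qed
  qed
qed

end
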